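(* Let $\varepsilon>0$ and $\boldsymbol\alpha(\mathbf{x},\mathbf{y})=\frac{\mathbf{y}-\mathbf{x}}{|\mathbf{y}-\mathbf{x}|^2}\chi_{B_\varepsilon(\mathbf{x})}(\mathbf{y})$ for $\mathbf{x},\mathbf{y}\in\mathbb{R}^3$. For $\mathbf{u}:\mathbb{R}^3\to\mathbb{R}^3$ let $(\mathcal{G}^*_{\boldsymbol\alpha}\mathbf{u})(\mathbf{x},\mathbf{y})=-\big(\mathbf{u}(\mathbf{y})-\mathbf{u}(\mathbf{x})\big)\cdot\boldsymbol\alpha(\mathbf{x},\mathbf{y})$ and $(\mathcal{D}^*_{\boldsymbol\alpha}\mathbf{u})(\mathbf{x},\mathbf{y})=-\big(\mathbf{u}(\mathbf{y})-\mathbf{u}(\mathbf{x})\big)\otimes\boldsymbol\alpha(\mathbf{x},\mathbf{y})$; for a scalar two-point function $\eta$ let $(\mathcal{G}_{\boldsymbol\alpha}\eta)(\mathbf{x})=\int_{\mathbb{R}^3}\big(\eta(\mathbf{y},\mathbf{x})+\eta(\mathbf{x},\mathbf{y})\big)\boldsymbol\alpha(\mathbf{x},\mathbf{y})\,d\mathbf{y}$, and for a tensor-valued two-point function $\boldsymbol\Psi$ let $(\mathcal{D}_{\boldsymbol\alpha}\boldsymbol\Psi)(\mathbf{x})=\int_{\mathbb{R}^3}\big(\boldsymbol\Psi(\mathbf{y},\mathbf{x})+\boldsymbol\Psi(\mathbf{x},\mathbf{y})\big)\boldsymbol\alpha(\mathbf{x},\mathbf{y})\,d\mathbf{y}$.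 Then for every scalar function $c$ on $\mathbb{R}^3$ and every $\mathbf{u}$ (with the integrals convergent), $\mathcal{D}_{\boldsymbol\alpha}\big(c(\mathcal{D}^*_{\boldsymbol\alpha}\mathbf{u})^T\big)=\mathcal{G}_{\boldsymbol\alpha}(c\,\mathcal{G}^*_{\boldsymbol\alpha}\mathbf{u})$, where $(c(\mathcal{D}^*_{\boldsymbol\alpha}\mathbf{u})^T)(\mathbf{x},\mathbf{y})=c(\mathbf{x})(\mathcal{D}^*_{\boldsymbol\alpha}\mathbf{u})(\mathbf{x},\mathbf{y})^T$ and $(c\,\mathcal{G}^*_{\boldsymbol\alpha}\mathbf{u})(\mathbf{x},\mathbf{y})=c(\mathbf{x})(\mathcal{G}^*_{\boldsymbol\alpha}\mathbf{u})(\mathbf{x},\mathbf{y})$.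
   Context: $B_\varepsilon(\mathbf{x})$ is the open ball of radius $\varepsilon$ about $\mathbf{x}$, $\chi_A$ the indicator of $A$, and $(\mathbf{a}\otimes\mathbf{b})_{ij}=a_ib_j$. *)

theory Defs
  imports "HOL-Analysis.Analysis"
begin

definition kernel_alpha :: "real \<Rightarrow> real^3 \<Rightarrow> real^3 \<Rightarrow> real^3" where
  "kernel_alpha eps x y =
     (if y \<in> ball x eps then (1 / (norm (y - x))\<^sup>2) *\<^sub>R (y - x) else 0)"

definition outer :: "real^3 \<Rightarrow> real^3 \<Rightarrow> real^3^3" where
  "outer a b = (\<chi> i j. a $ i * b $ j)"

definition Gstar :: "real \<Rightarrow> (real^3 \<Rightarrow> real^3) \<Rightarrow> real^3 \<Rightarrow> real^3 \<Rightarrow> real" where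
  "Gstar eps u x y = - ((u y - u x) \<bullet> kernel_alpha eps x y)"

definition Dstar :: "real \<Rightarrow> (real^3 \<Rightarrow> real^3) \<Rightarrow> real^3 \<Rightarrow> real^3 \<Rightarrow> real^3^3" where
  "Dstar eps u x y = - outer (u y - u x) (kernel_alpha eps x y)"

definition Gop :: "real \<Rightarrow> (real^3 \<Rightarrow> real^3 \<Rightarrow> real) \<Rightarrow> real^3 \<Rightarrow> real^3" where
  "Gop eps \<eta> x = integral UNIV (\<lambda>y. (\<eta> y x + \<eta> x y) *\<^sub>R kernel_alpha eps x y)"

definition Dop :: "real \<Rightarrow> (real^3 \<Rightarrow> real^3 \<Rightarrow> real^3^3) \<Rightarrow> real^3 \<Rightarrow> real^3" where
  "Dop eps \<Psi> x = integral UNIV (\<lambda>y. (\<Psi> y x + \<Psi> x y) *v kernel_alpha eps x y)"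

end

theory Submission
  imports Defs
begin

lemma ka_swap: "kernel_alpha eps y x = - kernel_alpha eps x y"
proof -
  have n: "norm (x - y) = norm (y - x)" by (rule norm_minus_commute)
  have b: "(x \<in> ball y eps) = (y \<in> ball x eps)" by (simp add: dist_commute)
  have d: "x - y = - (y - x)" by simp
  show ?thesis unfolding kernel_alpha_def b n
    by (subst d, simp only: scaleR_minus_right if_distrib minus_zero, simp)
qed

lemma outer_tr_mv: "transpose (outer a b) *v v = (a \<bullet> v) *\<^sub>R b"
  unfolding outer_def transpose_def
  unfolding matrix_vector_mult_def inner_vec_def vec_eq_iff
  by (simp add: sum_distrib_right mult.assoc mult.commute[of "b $ _"])

lemma transpose_scaleR_minus: "transpose (c *\<^sub>R - M) = c *\<^sub>R - transpose (M::real^3^3)"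
  by (simp add: transpose_def vec_eq_iff)

lemma mv_scaleR_minus: "(c *\<^sub>R - (M::real^3^3)) *v v = c *\<^sub>R - (M *v v)"
  by (simp add: matrix_vector_mult_def vec_eq_iff sum_negf sum_distrib_left mult.assoc)

lemma tr_neg: "transpose (- M) = - transpose (M::real^3^3)"
  by (simp add: transpose_def vec_eq_iff)

lemma core: "(p *\<^sub>R transpose (- outer a (- k)) + q *\<^sub>R transpose (- outer b k)) *v k
   = (p * - (a \<bullet> (- k)) + q * - (b \<bullet> k)) *\<^sub>R k"
proof -
  have "(p *\<^sub>R transpose (- outer a (- k)) + q *\<^sub>R transpose (- outer b k)) *v k
     = (p *\<^sub>R - transpose (outer a (- k))) *v k + (q *\<^sub>R - transpose (outer b k)) *v k"
    by (simp only: matrix_vector_mult_add_rdistrib tr_neg)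
  also have "\<dots> = p *\<^sub>R - (transpose (outer a (- k)) *v k) + q *\<^sub>R - (transpose (outer b k) *v k)"
    by (simp only: mv_scaleR_minus)
  also have "\<dots> = (p * - (a \<bullet> (- k)) + q * - (b \<bullet> k)) *\<^sub>R k"
    by (simp only: outer_tr_mv) (simp add: inner_minus_right scaleR_add_left scaleR_diff_left)
  finally show ?thesis .
qed

theorem proposition4p3:
  fixes eps :: real and c :: "real^3 \<Rightarrow> real" and u :: "real^3 \<Rightarrow> real^3"
  assumes "eps > 0"
    and "\<And>x. (\<lambda>y. ((\<lambda>x y. c x *\<^sub>R transpose (Dstar eps u x y)) y x
                    + (\<lambda>x y. c x *\<^sub>R transpose (Dstar eps u x y)) x y) *v kernel_alpha eps x y)
              integrable_on UNIV"
    and "\<And>x. (\<lambda>y. ((\<lambda>x y. c x * Gstar eps u x y) y x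
                    + (\<lambda>x y. c x * Gstar eps u x y) x y) *\<^sub>R kernel_alpha eps x y)
              integrable_on UNIV"
  shows "Dop eps (\<lambda>x y. c x *\<^sub>R transpose (Dstar eps u x y))
         = Gop eps (\<lambda>x y. c x * Gstar eps u x y)"
proof
  fix x
  have eq: "\<And>y. (c y *\<^sub>R transpose (Dstar eps u y x) + c x *\<^sub>R transpose (Dstar eps u x y)) *v kernel_alpha eps x y
     = (c y * Gstar eps u y x + c x * Gstar eps u x y) *\<^sub>R kernel_alpha eps x y"
  proof -
    fix y
    have k: "kernel_alpha eps y x = - kernel_alpha eps x y" by (rule ka_swap)
    show "?thesis y" unfolding Dstar_def Gstar_def k by (rule core)
  qed
  then show "Dop eps (\<lambda>x y. c x *\<^sub>R transpose (Dstar eps u x y)) x = Gop eps (\<lambda>x y. c x * Gstar eps u x y) x"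
    unfolding Dop_def Gop_def using eq by simp
qed

end
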